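(* Let $(\varphi_A)_{A\subseteq\{1,\dots,m\}}$ be $\{0,1\}$-valued statistics of the form $\varphi_A=\max_{t\in[0,1]}\varphi_{A,t}$ with $\varphi_{A,t}\in\{0,1\}$. For $S\subseteq\{1,\dots,m\}$, $n\in\{0,\dots,|S|\}$, $t\in[0,1]$, let $\varphi_{S,n,t}=\min\{\varphi_{A,t}: A\subseteq\{1,\dots,m\},\ |A\cap S|=n\}$, and define $$\hat V^{\mathrm{SC1}}_\varphi(S)=\max\{n\in\{0,\dots,|S|\}:\max_{t\in[0,1]}\varphi_{S,n,t}=0\},\qquad \hat V^{\mathrm{SC2}}_\varphi(S)=\min_{t\in[0,1]}\max\{n\in\{0,\dots,|S|\}:\varphi_{S,n,t}=0\}.$$ Then for all $S\subseteq\{1,\dots,m\}$, $\hat V^{\mathrm{IP}}_\varphi(S)\le\hat V^{\mathrm{SC1}}_\varphi(S)\le\hat V^{\mathrm{SC2}}_\varphi(S)$.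
   Context: Inversion procedure bound: $\mathcal N_\varphi=\{A\subseteq\{1,\dots,m\}:\varphi_A=0\}$ and $\hat V^{\mathrm{IP}}_\varphi(S)=\max_{A\in\mathcal N_\varphi}|A\cap S|$. Convention: the maximum of an empty set of integers is $0$. *)

theory Defs
  imports Main "HOL.Real"
begin

definition maxz :: "nat set \<Rightarrow> nat" where
  "maxz X = (if X = {} then 0 else Max X)"

definition phiA :: "(nat set \<Rightarrow> real \<Rightarrow> nat) \<Rightarrow> nat set \<Rightarrow> nat" where
  "phiA phi A = Max ((\<lambda>t. phi A t) ` {0..1})"

definition phiSnt :: "(nat set \<Rightarrow> real \<Rightarrow> nat) \<Rightarrow> nat \<Rightarrow> nat set \<Rightarrow> nat \<Rightarrow> real \<Rightarrow> nat" where
  "phiSnt phi m S n t = Min {phi A t | A. A \<subseteq> {1..m} \<and> card (A \<inter> S) = n}"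

definition V_IP :: "(nat set \<Rightarrow> real \<Rightarrow> nat) \<Rightarrow> nat \<Rightarrow> nat set \<Rightarrow> nat" where
  "V_IP phi m S = maxz {card (A \<inter> S) | A. A \<subseteq> {1..m} \<and> phiA phi A = 0}"

definition V_SC1 :: "(nat set \<Rightarrow> real \<Rightarrow> nat) \<Rightarrow> nat \<Rightarrow> nat set \<Rightarrow> nat" where
  "V_SC1 phi m S = maxz {n. n \<le> card S \<and> Max ((\<lambda>t. phiSnt phi m S n t) ` {0..1}) = 0}"

definition V_SC2 :: "(nat set \<Rightarrow> real \<Rightarrow> nat) \<Rightarrow> nat \<Rightarrow> nat set \<Rightarrow> nat" where
  "V_SC2 phi m S = Min ((\<lambda>t. maxz {n. n \<le> card S \<and> phiSnt phi m S n t = 0}) ` {0..1})"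

end

theory Submission
  imports Defs
begin

lemma maxz_ge: "finite X \<Longrightarrow> x \<in> X \<Longrightarrow> x \<le> maxz X"
  unfolding maxz_def by auto

lemma maxz_bound: "finite X \<Longrightarrow> (\<And>x. x \<in> X \<Longrightarrow> x \<le> k) \<Longrightarrow> maxz X \<le> (k::nat)"
  unfolding maxz_def by auto

lemma maxz_cases: "maxz X = 0 \<or> (finite X \<longrightarrow> maxz X \<in> X)"
  unfolding maxz_def by auto

lemma phiSnt_bin:
  assumes binary: "\<And>A t. A \<subseteq> {1..m} \<Longrightarrow> t \<in> {0..1} \<Longrightarrow> phi A t \<in> {0, 1}"
    and S: "S \<subseteq> {1..m}" and n: "n \<le> card S" and t: "t \<in> {0..1}"
  shows "phiSnt phi m S n t \<in> {0,1}"
proof -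
  have fS: "finite S" using S finite_subset by blast
  obtain B where B: "B \<subseteq> S" "card B = n" using obtain_subset_with_card_n[OF n] by blast
  have "B \<inter> S = B" using B by auto
  let ?X = "{phi A t | A. A \<subseteq> {1..m} \<and> card (A \<inter> S) = n}"
  have ne: "phi B t \<in> ?X" using B S \<open>B \<inter> S = B\<close> by (metis (mono_tags, lifting) mem_Collect_eq subset_trans)
  have "?X = (\<lambda>A. phi A t) ` {A. A \<subseteq> {1..m} \<and> card (A \<inter> S) = n}" by auto
  moreover have "finite {A. A \<subseteq> {1..m} \<and> card (A \<inter> S) = n}"
    by (rule finite_subset[of _ "Pow {1..m}"]) auto
  ultimately have fin: "finite ?X" by simp
  have "Min ?X \<in> ?X" using fin ne by (intro Min_in) auto
  then obtain A where "A \<subseteq> {1..m}" "Min ?X = phi A t" by auto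
  then show ?thesis unfolding phiSnt_def using binary[OF _ t] by simp
qed

theorem mainTheorem5:
  fixes phi :: "nat set \<Rightarrow> real \<Rightarrow> nat" and m :: nat and S :: "nat set"
  assumes binary: "\<And>A t. A \<subseteq> {1..m} \<Longrightarrow> t \<in> {0..1} \<Longrightarrow> phi A t \<in> {0, 1}"
    and S: "S \<subseteq> {1..m}"
  shows "V_IP phi m S \<le> V_SC1 phi m S \<and> V_SC1 phi m S \<le> V_SC2 phi m S"
proof
  have fS: "finite S" using S finite_subset by blast
  let ?SC1 = "{n. n \<le> card S \<and> Max ((\<lambda>t. phiSnt phi m S n t) ` {0..1}) = 0}"
  have fSC1: "finite ?SC1" by (rule finite_subset[of _ "{..card S}"]) auto
  have finimg: "finite ((\<lambda>t. phiSnt phi m S n t) ` {0..1})" if "n \<le> card S" for n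
    by (rule finite_subset[of _ "{0,1}"]) (use phiSnt_bin[of m phi S, OF binary S that] in fastforce, simp)
  let ?IP = "{card (A \<inter> S) | A. A \<subseteq> {1..m} \<and> phiA phi A = 0}"
  show "V_IP phi m S \<le> V_SC1 phi m S"
  proof (cases "V_IP phi m S = 0")
    case False
    have fIP: "finite ?IP" by (rule finite_subset[of _ "{..card S}"])
        (auto intro: card_mono[OF fS])
    with False maxz_cases[of ?IP] have "V_IP phi m S \<in> ?IP" unfolding V_IP_def by auto
    then obtain A where A: "A \<subseteq> {1..m}" "phiA phi A = 0" "V_IP phi m S = card (A \<inter> S)" by auto
    have fA: "finite ((\<lambda>t. phi A t) ` {0..1})"
      by (rule finite_subset[of _ "{0::nat,1}"]) (use binary[OF A(1)] in fastforce, simp)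
    have z: "phi A t = 0" if "t \<in> {0..1}" for t
    proof -
      have "phi A t \<le> Max ((\<lambda>t. phi A t) ` {0..1})" using fA that by auto
      then show ?thesis using A(2) unfolding phiA_def by simp
    qed
    let ?n = "card (A \<inter> S)"
    have nle: "?n \<le> card S" by (rule card_mono[OF fS]) auto
    have z2: "phiSnt phi m S ?n t = 0" if "t \<in> {0..1}" for t
    proof -
      have fin: "finite {phi B t | B. B \<subseteq> {1..m} \<and> card (B \<inter> S) = ?n}"
      proof -
        have "{phi B t | B. B \<subseteq> {1..m} \<and> card (B \<inter> S) = ?n} = (\<lambda>B. phi B t) ` {B. B \<subseteq> {1..m} \<and> card (B \<inter> S) = ?n}" by auto
        moreover have "finite {B. B \<subseteq> {1..m} \<and> card (B \<inter> S) = ?n}"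
          by (rule finite_subset[of _ "Pow {1..m}"]) auto
        ultimately show ?thesis by simp
      qed
      have "0 \<in> {phi B t | B. B \<subseteq> {1..m} \<and> card (B \<inter> S) = ?n}" using A(1) z[OF that] by force
      then show ?thesis unfolding phiSnt_def using fin by (meson Min_le le_zero_eq)
    qed
    have "(\<lambda>t. phiSnt phi m S ?n t) ` {0..1} = {0}" using z2 by force
    then have "?n \<in> ?SC1" using nle by simp
    then show ?thesis unfolding V_SC1_def using A(3) maxz_ge[OF fSC1] by simp
  qed auto
  show "V_SC1 phi m S \<le> V_SC2 phi m S"
  proof (cases "V_SC1 phi m S = 0")
    case False
    with maxz_cases[of ?SC1] fSC1 have mem: "V_SC1 phi m S \<in> ?SC1" unfolding V_SC1_def by auto
    let ?n = "V_SC1 phi m S"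
    have nle: "?n \<le> card S" using mem by simp
    have z: "phiSnt phi m S ?n t = 0" if "t \<in> {0..1}" for t
    proof -
      have "phiSnt phi m S ?n t \<le> Max ((\<lambda>t. phiSnt phi m S ?n t) ` {0..1})"
        using finimg[OF nle] that by auto
      then show ?thesis using mem by simp
    qed
    let ?F = "(\<lambda>t. maxz {n. n \<le> card S \<and> phiSnt phi m S n t = 0}) ` {0..1}"
    have fF: "finite ?F"
      by (rule finite_subset[of _ "{..card S}"]) (auto intro!: maxz_bound)
    have "?F \<noteq> {}" by auto
    then have "V_SC2 phi m S \<in> ?F" unfolding V_SC2_def using fF Min_in by blast
    then obtain t where t: "t \<in> {0..1}" "V_SC2 phi m S = maxz {n. n \<le> card S \<and> phiSnt phi m S n t = 0}" by auto
    show ?thesis unfolding t(2) by (rule maxz_ge) (use nle z[OF t(1)] in auto)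
  qed auto
qed

end
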